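(* Let $N\ge2$, $s\in(0,1)$, $\beta\in(2s,1]$, and let $\mathcal K_s$ be a kernel as described in the context, with associated constant $C_{N,s}$. Let $E\subset\mathbb{R}^N$ be an open set with $\partial E$ of class $C^{1,\beta}$, $0\in\partial E$, and suppose there is $r_0>0$ such that for every $r\in(0,r_0]$, $$E\cap Q_r=\{(y',y_N)\in B^{N-1}_r\times(-r,r):\ y_N>\gamma(y')\},$$ where $Q_r=B^{N-1}_r\times(-r,r)$, $B^{N-1}_r$ is the ball of radius $r$ centred at $0$ in $\mathbb{R}^{N-1}$, and $\gamma\in C^{1,\beta}(B^{N-1}_{r_0})$ satisfies $|\gamma(y')|\le C_\gamma|y'|^{1+\beta}$. With $\tau_E=\mathbb 1_E-\mathbb 1_{\mathbb{R}^N\setminus\overline E}$, set for $r\in(0,r_0]$ and $t>0$ $$J_r(t)=\int_{Q_r}\mathcal K_s(y,t)\tau_E(y)\,dy,\qquad I_r(t)=\int_{\mathbb{R}^N\setminus Q_r}\left(t^{-1}\mathcal K_s(y,t)-\frac{C_{N,s}}{|y|^{N+2s}}\right)\tau_E(y)\,dy.$$ Then there is a constant $C>0$ depending only on $N,\beta,s$ and $E$ such that $|J_r(t)|\le C\,t\,r^{\beta-2s}$ for all $t>0$ and $r\in(0,r_0]$, and $\lim_{t\to0}I_r(t)=0$ for every $r\in(0,r_0]$.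
   Context: Kernel: $\mathcal K_s(x,t)=t^{-\frac{N}{2s}}P_s(t^{-\frac1{2s}}x)$ for $x\in\mathbb{R}^N$, $t>0$, where $P_s\in C^1(\mathbb{R}^N)$ is radially symmetric, and there are constants $\mathcal C_{N,s}>0$, $C_{N,s}>0$ with $$\frac{\mathcal C_{N,s}^{-1}}{1+|y|^{N+2s}}\le P_s(y)\le\frac{\mathcal C_{N,s}}{1+|y|^{N+2s}},\qquad |\nabla P_s(y)|\le\frac{\mathcal C_{N,s}}{1+|y|^{N+2s+1}}\quad(y\in\mathbb{R}^N),$$ and $\lim_{t\to0}t^{-1}\mathcal K_s(y,t)=\frac{C_{N,s}}{|y|^{N+2s}}$ locally uniformly in $\mathbb{R}^N\setminus\{0\}$. *)

theory Defs
  imports "HOL-Analysis.Analysis"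
begin

text \<open>Euclidean space R^N is modelled as the product type (real^'m) \<times> real,
  with N = CARD('m) + 1; a point y is the pair (y', y_N).
  The product norm is Euclidean, and lborel on the product type is Lebesgue measure.\<close>

definition dimN :: "'m::finite itself \<Rightarrow> real" where
  "dimN _ = real CARD('m) + 1"

definition cyl :: "real \<Rightarrow> ((real^'m::finite) \<times> real) set" where
  "cyl r = ball 0 r \<times> {-r<..<r}"

definition C1_holder_on :: "real \<Rightarrow> 'a::euclidean_space set \<Rightarrow> ('a \<Rightarrow> real) \<Rightarrow> bool" where
  "C1_holder_on \<beta> S g \<longleftrightarrow>
     (\<exists>G. (\<forall>x\<in>S. (g has_derivative (\<lambda>h. G x \<bullet> h)) (at x within S))
        \<and> bounded (g ` S) \<and> bounded (G ` S)
        \<and> (\<exists>H. \<forall>x\<in>S. \<forall>y\<in>S. norm (G x - G y) \<le> H * norm (x - y) powr \<beta>))"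

definition C1beta_boundary :: "real \<Rightarrow> ((real^'m::finite) \<times> real) set \<Rightarrow> bool" where
  "C1beta_boundary \<beta> E \<longleftrightarrow>
     (\<forall>p\<in>frontier E. \<exists>(R::(real^'m) \<times> real \<Rightarrow> (real^'m) \<times> real) \<rho> (g::real^'m \<Rightarrow> real).
        orthogonal_transformation R \<and> \<rho> > 0
        \<and> C1_holder_on \<beta> (ball (0::real^'m) \<rho>) g
        \<and> E \<inter> (\<lambda>y. p + R y) ` (cyl \<rho> :: ((real^'m) \<times> real) set)
            = (\<lambda>y. p + R y) ` {y \<in> cyl \<rho>. snd y > g (fst y)})"

definition kern :: "(((real^'m::finite) \<times> real) \<Rightarrow> real) \<Rightarrow> real \<Rightarrow> ((real^'m) \<times> real) \<Rightarrow> real \<Rightarrow> real" where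
  "kern P s x t = t powr (- dimN TYPE('m) / (2 * s)) * P (t powr (- 1 / (2 * s)) *\<^sub>R x)"

definition tauE :: "'a::topological_space set \<Rightarrow> 'a \<Rightarrow> real" where
  "tauE E y = indicator E y - indicator (- closure E) y"

end

theory Submission
  imports Defs
begin



lemma dyadic_cover_in:
  fixes r x :: real assumes "0 < r" "0 < x" "x < r"
  shows "\<exists>k::nat. r / 2^(Suc k) < x \<and> x \<le> r / 2^k"
proof -
  obtain n :: nat where n: "r / x < 2^n" using real_arch_pow[of 2 "r/x"] by auto
  hence "r / 2^n < x" using assms by (simp add: field_simps)
  hence ex: "\<exists>k. r / 2^(Suc k) < x"
  proof -
    have "r / 2^(Suc n) \<le> r / 2^n" using assms by (simp add: field_simps)
    thus ?thesis using \<open>r / 2^n < x\<close> by (intro exI[of _ n]) linarith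
  qed
  define k where "k = (LEAST k. r / 2^(Suc k) < x)"
  have k1: "r / 2^(Suc k) < x" unfolding k_def by (rule LeastI_ex[OF ex])
  have "x \<le> r / 2^k"
  proof (cases k)
    case 0 then show ?thesis using assms by simp
  next
    case (Suc j)
    have "\<not> r / 2^(Suc j) < x" using not_less_Least[of j "\<lambda>k. r / 2^(Suc k) < x"] Suc k_def by auto
    then show ?thesis using Suc by simp
  qed
  with k1 show ?thesis by blast
qed

lemma radial_in:
  fixes r \<delta> :: real
  assumes d: "0 < \<delta>" "\<delta> \<le> DIM('a)" and r: "0 < r"
  shows "(\<integral>\<^sup>+x. indicator (ball (0::'a::euclidean_space) r) x * ennreal (norm x powr (\<delta> - DIM('a))) \<partial>lborel)
     \<le> ennreal (unit_ball_vol DIM('a) * 2 powr (DIM('a) - \<delta>) * r powr \<delta> / (1 - 2 powr (-\<delta>)))"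
proof -
  define d where "d = real DIM('a)"
  define A where "A k = {x::'a. r/2^(Suc k) < norm x \<and> norm x \<le> r/2^k}" for k
  define c where "c k = (r/2^(Suc k)) powr (\<delta> - d)" for k
  define V where "V = unit_ball_vol DIM('a)"
  define q where "q = (2::real) powr (-\<delta>)"
  define K0 where "K0 = V * 2 powr (d - \<delta>) * r powr \<delta>"
  have V: "V \<ge> 0" unfolding V_def by (simp add: unit_ball_vol_def)
  have q: "0 < q" "q < 1"
  proof -
    show "0 < q" unfolding q_def by simp
    have "(2::real) powr -\<delta> < 2 powr 0" using d by (subst powr_less_cancel_iff) auto
    thus "q < 1" unfolding q_def by simp
  qed
  have Ameas[measurable]: "A k \<in> sets borel" for k unfolding A_def by measurable
  have pw: "indicator (ball 0 r) x * ennreal (norm x powr (\<delta> - d))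
      \<le> (\<Sum>k. indicator (A k) x * ennreal (c k))" for x :: 'a
  proof (cases "x \<in> ball 0 r \<and> x \<noteq> 0")
    case True
    then obtain k where k: "x \<in> A k" using dyadic_cover_in[OF r, of "norm x"] unfolding A_def by auto
    have "norm x powr (\<delta> - d) \<le> c k"
      unfolding c_def using k d unfolding A_def d_def by (intro powr_mono2') (auto simp: r)
    hence "indicator (ball 0 r) x * ennreal (norm x powr (\<delta> - d)) \<le> indicator (A k) x * ennreal (c k)"
      using k True by (auto intro: ennreal_leI)
    also have "\<dots> \<le> (\<Sum>k. indicator (A k) x * ennreal (c k))"
    proof -
      have "(\<Sum>i\<in>{k}. indicator (A i) x * ennreal (c i)) \<le> (\<Sum>i. indicator (A i) x * ennreal (c i))"
        by (rule sum_le_suminf[OF summableI]) auto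
      thus ?thesis by (simp only: sum.insert finite.emptyI empty_iff sum.empty add_0_right not_False_eq_True)
    qed
    finally show ?thesis .
  next
    case False then show ?thesis by (auto simp: indicator_def)
  qed
  have "(\<integral>\<^sup>+x. indicator (ball (0::'a) r) x * ennreal (norm x powr (\<delta> - DIM('a))) \<partial>lborel)
     \<le> (\<integral>\<^sup>+x. (\<Sum>k. indicator (A k) x * ennreal (c k)) \<partial>lborel)"
    using pw unfolding d_def by (intro nn_integral_mono) auto
  also have "\<dots> = (\<Sum>k. \<integral>\<^sup>+x. indicator (A k) x * ennreal (c k) \<partial>lborel)"
    by (rule nn_integral_suminf) auto
  also have "\<dots> = (\<Sum>k. ennreal (c k) * emeasure lborel (A k))"
    by (subst nn_integral_cmult_indicator[symmetric]) (auto simp: mult.commute)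
  also have "\<dots> \<le> (\<Sum>k. ennreal (K0 * q^k))"
  proof (intro suminf_le allI)
    fix k
    have "A k \<subseteq> cball 0 (r/2^k)" unfolding A_def by auto
    hence "emeasure lborel (A k) \<le> emeasure lborel (cball (0::'a) (r/2^k))" by (intro emeasure_mono) auto
    also have "\<dots> = ennreal (V * (r/2^k)^DIM('a))" unfolding V_def using r by (subst emeasure_cball) auto
    finally have "ennreal (c k) * emeasure lborel (A k) \<le> ennreal (c k) * ennreal (V * (r/2^k)^DIM('a))"
      by (intro mult_left_mono) auto
    also have "\<dots> = ennreal (K0 * q^k)"
    proof -
      have "c k * (V * (r/2^k)^DIM('a)) = K0 * q^k"
      proof -
        have e1: "(r/2^k)^DIM('a) = (r/2^k) powr d" unfolding d_def using r by (simp add: powr_realpow)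
        have e2: "(r/2^(Suc k)) = (r/2^k) / 2" by simp
        have "c k * (r/2^k) powr d = (r/2^k) powr (\<delta> - d) / 2 powr (\<delta> - d) * (r/2^k) powr d"
          unfolding c_def e2 using r by (simp add: powr_divide powr_mult)
        also have "\<dots> = (r/2^k) powr \<delta> * 2 powr (d - \<delta>)"
          using r by (simp add: powr_add[symmetric] powr_diff powr_minus field_simps)
        also have "(r/2^k) powr \<delta> = r powr \<delta> * q^k"
          using r unfolding q_def by (simp add: powr_divide powr_minus powr_realpow[symmetric] powr_powr field_simps
               flip: powr_realpow)
        finally show ?thesis unfolding K0_def e1 by (simp add: algebra_simps)
      qed
      moreover have "0 \<le> c k" unfolding c_def by simp
      ultimately show ?thesis using V r by (simp add: ennreal_mult'[symmetric])
    qed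
    finally show "ennreal (c k) * emeasure lborel (A k) \<le> ennreal (K0 * q^k)" .
  qed (simp_all add: summableI)
  also have "\<dots> = ennreal (\<Sum>k. K0 * q^k)"
    using q V r unfolding K0_def
    by (intro suminf_ennreal2) (auto intro!: summable_mult summable_geometric)
  also have "(\<Sum>k. K0 * q^k) = K0 / (1 - q)"
    using q by (simp add: suminf_mult suminf_geometric summable_geometric)
  finally show ?thesis unfolding K0_def V_def q_def d_def by simp
qed



lemma dyadic_cover_out:
  fixes r x :: real assumes "0 < r" "r \<le> x"
  shows "\<exists>k::nat. r * 2^k \<le> x \<and> x < r * 2^(Suc k)"
proof -
  obtain n :: nat where n: "x / r < 2^n" using real_arch_pow[of 2 "x/r"] by auto
  hence "x < r * 2^n" using assms by (simp add: field_simps)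
  hence ex: "\<exists>k. x < r * 2^(Suc k)"
  proof -
    have "r * 2^n \<le> r * 2^(Suc n)" using assms by (simp add: field_simps)
    thus ?thesis using \<open>x < r * 2^n\<close> by (intro exI[of _ n]) linarith
  qed
  define k where "k = (LEAST k. x < r * 2^(Suc k))"
  have k1: "x < r * 2^(Suc k)" unfolding k_def by (rule LeastI_ex[OF ex])
  have "r * 2^k \<le> x"
  proof (cases k)
    case 0 then show ?thesis using assms by simp
  next
    case (Suc j)
    have "\<not> x < r * 2^(Suc j)" using not_less_Least[of j "\<lambda>k. x < r * 2^(Suc k)"] Suc k_def by auto
    then show ?thesis using Suc by simp
  qed
  with k1 show ?thesis by blast
qed

lemma radial_out:
  fixes r a :: real
  assumes a: "DIM('a) < a" and r: "0 < r"
  shows "(\<integral>\<^sup>+x. indicator (- ball (0::'a::euclidean_space) r) x * ennreal (norm x powr (- a)) \<partial>lborel) < \<infinity>"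
proof -
  define d where "d = real DIM('a)"
  define A where "A k = {x::'a. r * 2^k \<le> norm x \<and> norm x < r * 2^(Suc k)}" for k
  define c where "c k = (r * 2^k) powr (- a)" for k
  define V where "V = unit_ball_vol DIM('a)"
  define q where "q = (2::real) powr (d - a)"
  define K0 where "K0 = V * 2 powr d * r powr (d - a)"
  have V: "V \<ge> 0" unfolding V_def by (simp add: unit_ball_vol_def)
  have q: "0 < q" "q < 1"
  proof -
    show "0 < q" unfolding q_def by simp
    have "(2::real) powr (d - a) < 2 powr 0" using a unfolding d_def by (subst powr_less_cancel_iff) auto
    thus "q < 1" unfolding q_def by simp
  qed
  have Ameas[measurable]: "A k \<in> sets borel" for k unfolding A_def by measurable
  have pw: "indicator (- ball 0 r) x * ennreal (norm x powr (- a))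
      \<le> (\<Sum>k. indicator (A k) x * ennreal (c k))" for x :: 'a
  proof (cases "x \<notin> ball 0 r")
    case True
    then obtain k where k: "x \<in> A k" using dyadic_cover_out[OF r, of "norm x"] unfolding A_def by auto
    have "norm x powr (- a) \<le> c k"
      unfolding c_def using k a r unfolding A_def d_def by (intro powr_mono2') auto
    hence "indicator (- ball 0 r) x * ennreal (norm x powr (- a)) \<le> indicator (A k) x * ennreal (c k)"
      using k True by (auto intro: ennreal_leI)
    also have "\<dots> \<le> (\<Sum>k. indicator (A k) x * ennreal (c k))"
    proof -
      have "(\<Sum>i\<in>{k}. indicator (A i) x * ennreal (c i)) \<le> (\<Sum>i. indicator (A i) x * ennreal (c i))"
        by (rule sum_le_suminf[OF summableI]) auto
      thus ?thesis by (simp only: sum.insert finite.emptyI empty_iff sum.empty add_0_right not_False_eq_True)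
    qed
    finally show ?thesis .
  next
    case False then show ?thesis by (auto simp: indicator_def)
  qed
  have "(\<integral>\<^sup>+x. indicator (- ball (0::'a) r) x * ennreal (norm x powr (- a)) \<partial>lborel)
     \<le> (\<integral>\<^sup>+x. (\<Sum>k. indicator (A k) x * ennreal (c k)) \<partial>lborel)"
    using pw by (intro nn_integral_mono) auto
  also have "\<dots> = (\<Sum>k. \<integral>\<^sup>+x. indicator (A k) x * ennreal (c k) \<partial>lborel)"
    by (rule nn_integral_suminf) auto
  also have "\<dots> = (\<Sum>k. ennreal (c k) * emeasure lborel (A k))"
    by (subst nn_integral_cmult_indicator[symmetric]) (auto simp: mult.commute)
  also have "\<dots> \<le> (\<Sum>k. ennreal (K0 * q^k))"
  proof (intro suminf_le allI)
    fix k
    have "A k \<subseteq> cball 0 (r * 2^(Suc k))" unfolding A_def by auto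
    hence "emeasure lborel (A k) \<le> emeasure lborel (cball (0::'a) (r * 2^(Suc k)))" by (intro emeasure_mono) auto
    also have "\<dots> = ennreal (V * (r * 2^(Suc k))^DIM('a))" unfolding V_def using r by (subst emeasure_cball) auto
    finally have "ennreal (c k) * emeasure lborel (A k) \<le> ennreal (c k) * ennreal (V * (r * 2^(Suc k))^DIM('a))"
      by (intro mult_left_mono) auto
    also have "\<dots> = ennreal (K0 * q^k)"
    proof -
      have "c k * (V * (r * 2^(Suc k))^DIM('a)) = K0 * q^k"
      proof -
        have e1: "(r * 2^(Suc k))^DIM('a) = (r * 2^k) powr d * 2 powr d" unfolding d_def using r
          by (simp add: powr_realpow[symmetric] powr_mult)
        have "c k * ((r * 2^k) powr d * 2 powr d) = (r * 2^k) powr (d - a) * 2 powr d"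
          unfolding c_def using r by (simp add: powr_add[symmetric])
        also have "(r * 2^k) powr (d - a) = r powr (d - a) * q^k"
          using r unfolding q_def by (simp add: powr_mult powr_realpow[symmetric] powr_powr field_simps
               flip: powr_realpow)
        finally show ?thesis unfolding K0_def e1 by (simp add: algebra_simps)
      qed
      moreover have "0 \<le> c k" unfolding c_def by simp
      ultimately show ?thesis using V r by (simp add: ennreal_mult'[symmetric])
    qed
    finally show "ennreal (c k) * emeasure lborel (A k) \<le> ennreal (K0 * q^k)" .
  qed (simp_all add: summableI)
  also have "\<dots> = ennreal (\<Sum>k. K0 * q^k)"
    using q V r unfolding K0_def
    by (intro suminf_ennreal2) (auto intro!: summable_mult summable_geometric)
  also have "\<dots> < \<infinity>" by simp
  finally show ?thesis .
qed



lemma dimN_pos: "dimN TYPE('m::finite) > 0" unfolding dimN_def by simp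

lemma kern_le:
  fixes P :: "(real^'m::finite) \<times> real \<Rightarrow> real"
  assumes P_upper: "\<And>y. P y \<le> CC / (1 + norm y powr (dimN TYPE('m) + 2 * s))"
    and s: "0 < s" and t: "0 < t" and y: "y \<noteq> 0" and CC: "CC > 0"
  shows "kern P s y t \<le> CC * t / norm y powr (dimN TYPE('m) + 2 * s)"
proof -
  define N where "N = dimN TYPE('m)"
  define a where "a = N + 2 * s"
  define u where "u = t powr (- 1 / (2 * s))"
  have N: "N > 0" unfolding N_def by (rule dimN_pos)
  have a: "a > 0" unfolding a_def using N s by simp
  have u: "u > 0" unfolding u_def using t by simp
  have ny: "norm y > 0" using y by simp
  have "P (u *\<^sub>R y) \<le> CC / (1 + norm (u *\<^sub>R y) powr a)" using P_upper unfolding a_def N_def by blast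
  also have "\<dots> \<le> CC / (norm (u *\<^sub>R y) powr a)"
    using CC u ny by (intro divide_left_mono) (auto intro!: mult_pos_pos add_pos_nonneg)
  also have "norm (u *\<^sub>R y) powr a = u powr a * norm y powr a"
    using u by (simp add: powr_mult)
  finally have 1: "P (u *\<^sub>R y) \<le> CC / (u powr a * norm y powr a)" .
  have "kern P s y t = t powr (- N / (2 * s)) * P (u *\<^sub>R y)"
    unfolding kern_def u_def N_def by simp
  also have "\<dots> \<le> t powr (- N / (2 * s)) * (CC / (u powr a * norm y powr a))"
    using 1 by (intro mult_left_mono) auto
  also have "u powr a = t powr (- N / (2 * s)) / t"
  proof -
    have "u powr a = t powr (- 1 / (2 * s) * a)" unfolding u_def by (simp add: powr_powr)
    also have "- 1 / (2 * s) * a = - N / (2 * s) - 1" unfolding a_def using s by (simp add: field_simps)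
    also have "t powr (- N / (2 * s) - 1) = t powr (- N / (2 * s)) / t" using t by (simp add: powr_diff)
    finally show ?thesis .
  qed
  also have "t powr (- N / (2 * s)) * (CC / (t powr (- N / (2 * s)) / t * norm y powr a)) = CC * t / norm y powr a"
    using t by (simp add: field_simps)
  finally show ?thesis unfolding a_def N_def .
qed

lemma kern_le_const:
  fixes P :: "(real^'m::finite) \<times> real \<Rightarrow> real"
  assumes P_upper: "\<And>y. P y \<le> CC / (1 + norm y powr (dimN TYPE('m) + 2 * s))"
    and CC: "CC > 0"
  shows "kern P s y t \<le> t powr (- dimN TYPE('m) / (2 * s)) * CC"
proof -
  define w where "w = norm (t powr (- 1 / (2 * s)) *\<^sub>R y) powr (dimN TYPE('m) + 2 * s)"
  have w: "0 \<le> w" unfolding w_def by simp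
  have "CC / (1 + w) \<le> CC / 1" using CC w by (intro divide_left_mono) auto
  hence "P (t powr (- 1 / (2 * s)) *\<^sub>R y) \<le> CC" using P_upper[of "t powr (- 1 / (2 * s)) *\<^sub>R y"]
    unfolding w_def by simp
  thus ?thesis unfolding kern_def by (intro mult_left_mono) auto
qed

lemma kern_nonneg:
  fixes P :: "(real^'m::finite) \<times> real \<Rightarrow> real"
  assumes P_lower: "\<And>y. inverse CC / (1 + norm y powr (dimN TYPE('m) + 2 * s)) \<le> P y"
    and CC: "CC > 0"
  shows "0 \<le> kern P s y t"
proof -
  define w where "w = norm (t powr (- 1 / (2 * s)) *\<^sub>R y) powr (dimN TYPE('m) + 2 * s)"
  have w: "0 \<le> w" unfolding w_def by simp
  have "0 \<le> inverse CC / (1 + w)" using CC w by simp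
  hence "0 \<le> P (t powr (- 1 / (2 * s)) *\<^sub>R y)"
    using P_lower[of "t powr (- 1 / (2 * s)) *\<^sub>R y"] unfolding w_def by linarith
  thus ?thesis unfolding kern_def by simp
qed

lemma kern_uminus:
  fixes P :: "(real^'m::finite) \<times> real \<Rightarrow> real"
  assumes P_radial: "\<And>x y. norm x = norm y \<Longrightarrow> P x = P y"
  shows "kern P s (- y) t = kern P s y t"
proof -
  have "norm (t powr (- 1 / (2 * s)) *\<^sub>R - y) = norm (t powr (- 1 / (2 * s)) *\<^sub>R y)" by simp
  from P_radial[OF this] show ?thesis unfolding kern_def by simp
qed


lemma lborel_distr_uminus_euclidean: "distr lborel borel uminus = (lborel :: 'a::euclidean_space measure)"
  by (subst lborel_affine[of "-1" 0]) (auto simp: density_1 one_ennreal_def[symmetric])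



theorem lemma2p2:
  fixes P :: "(real^'m::finite) \<times> real \<Rightarrow> real"
    and gradP :: "(real^'m) \<times> real \<Rightarrow> (real^'m) \<times> real"
    and s \<beta> CC CNs r0 C\<gamma> :: real
    and E :: "((real^'m) \<times> real) set"
    and \<gamma> :: "real^'m \<Rightarrow> real"
  assumes s: "0 < s" "s < 1"
    and \<beta>: "2 * s < \<beta>" "\<beta> \<le> 1"
    and P_deriv: "\<And>y. (P has_derivative (\<lambda>h. gradP y \<bullet> h)) (at y)"
    and gradP_cont: "continuous_on UNIV gradP"
    and P_radial: "\<And>x y. norm x = norm y \<Longrightarrow> P x = P y"
    and CC_pos: "CC > 0" and CNs_pos: "CNs > 0"
    and P_lower: "\<And>y. inverse CC / (1 + norm y powr (dimN TYPE('m) + 2 * s)) \<le> P y"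
    and P_upper: "\<And>y. P y \<le> CC / (1 + norm y powr (dimN TYPE('m) + 2 * s))"
    and gradP_bound: "\<And>y. norm (gradP y) \<le> CC / (1 + norm y powr (dimN TYPE('m) + 2 * s + 1))"
    and kern_lim: "\<And>S. compact S \<Longrightarrow> 0 \<notin> S \<Longrightarrow>
        uniform_limit S (\<lambda>t y. kern P s y t / t)
          (\<lambda>y. CNs / norm y powr (dimN TYPE('m) + 2 * s)) (at_right 0)"
    and E_open: "open E"
    and E_bdry: "C1beta_boundary \<beta> E"
    and zero_bdry: "0 \<in> frontier E"
    and r0: "r0 > 0"
    and \<gamma>_reg: "C1_holder_on \<beta> (ball 0 r0) \<gamma>"
    and \<gamma>_bound: "\<And>y'. y' \<in> ball 0 r0 \<Longrightarrow> \<bar>\<gamma> y'\<bar> \<le> C\<gamma> * norm y' powr (1 + \<beta>)"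
    and E_graph: "\<And>r. 0 < r \<Longrightarrow> r \<le> r0 \<Longrightarrow>
        E \<inter> cyl r = {y \<in> cyl r. snd y > \<gamma> (fst y)}"
  shows "(\<exists>C>0. \<forall>t>0. \<forall>r. 0 < r \<and> r \<le> r0 \<longrightarrow>
            \<bar>LINT y:cyl r|lborel. kern P s y t * tauE E y\<bar> \<le> C * t * r powr (\<beta> - 2 * s))
       \<and> (\<forall>r. 0 < r \<and> r \<le> r0 \<longrightarrow>
            ((\<lambda>t. LINT y:(- cyl r)|lborel.
                 (kern P s y t / t - CNs / norm y powr (dimN TYPE('m) + 2 * s)) * tauE E y)
              \<longlongrightarrow> 0) (at_right 0))"
proof -
  define N where "N = dimN TYPE('m)"
  define a where "a = N + 2 * s"
  have N_eq: "N = real CARD('m) + 1" unfolding N_def dimN_def by simp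
  have Pcont: "continuous_on UNIV P"
    using P_deriv has_derivative_continuous by (metis continuous_at_imp_continuous_on)
  have Pmeas[measurable]: "P \<in> borel_measurable borel" by (rule borel_measurable_continuous_onI[OF Pcont])
  have Kmeas[measurable]: "(\<lambda>y. kern P s y t) \<in> borel_measurable borel" for t
    unfolding kern_def by measurable
  have closE: "closed (closure E)" by simp
  have tmeas[measurable]: "tauE E \<in> borel_measurable borel"
    unfolding tauE_def using E_open closE by (intro borel_measurable_diff borel_measurable_indicator) (auto intro: borel_open borel_closed)
  have cyl_open: "open (cyl r :: ((real^'m) \<times> real) set)" for r
    unfolding cyl_def by (intro open_Times) auto
  have cyl_meas[measurable]: "(cyl r :: ((real^'m) \<times> real) set) \<in> sets borel" for r
    using cyl_open by (rule borel_open)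
  have ball_cyl: "ball 0 r \<subseteq> (cyl r :: ((real^'m) \<times> real) set)" for r
  proof
    fix y :: "(real^'m) \<times> real" assume "y \<in> ball 0 r"
    hence "norm y < r" by simp
    moreover have "norm (fst y) \<le> norm y" "\<bar>snd y\<bar> \<le> norm y"
      using norm_fst_le[of "fst y" "snd y"] norm_snd_le[of "snd y" "fst y"] by auto
    ultimately show "y \<in> cyl r" unfolding cyl_def by (cases y) auto
  qed
  have \<gamma>_cont: "continuous_on (ball 0 r0) \<gamma>"
  proof -
    obtain G where G: "\<And>x. x \<in> ball 0 r0 \<Longrightarrow> (\<gamma> has_derivative (\<lambda>h. G x \<bullet> h)) (at x within ball 0 r0)"
      using \<gamma>_reg unfolding C1_holder_on_def by blast
    show ?thesis by (rule has_derivative_continuous_on[OF G])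
  qed
  have tau_eq: "tauE E y = sgn (snd y)"
    if r: "0 < r" "r \<le> r0" and y: "y \<in> cyl r" and gy: "\<bar>\<gamma> (fst y)\<bar> < \<bar>snd y\<bar>" for r y
  proof (cases "snd y > \<gamma> (fst y)")
    case True
    hence "y \<in> E" using E_graph[OF r] y by blast
    hence "y \<in> closure E" using closure_subset by blast
    moreover have "snd y > 0" using True gy by linarith
    ultimately show ?thesis using \<open>y \<in> E\<close> unfolding tauE_def by simp
  next
    case False
    hence neg: "snd y < 0" using gy by linarith
    define U where "U = cyl r \<inter> (\<lambda>z. \<gamma> (fst z) - snd z) -` {0<..}"
    have fsub: "fst ` cyl r \<subseteq> ball 0 r0" using r unfolding cyl_def by auto
    have "continuous_on (cyl r) (\<lambda>z. \<gamma> (fst z) - snd z)"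
      by (intro continuous_intros continuous_on_compose2[OF \<gamma>_cont _ fsub]) 
    hence "open U" unfolding U_def using cyl_open by (intro continuous_open_preimage) auto
    moreover have "U \<inter> E = {}"
    proof -
      { fix z assume z: "z \<in> U" "z \<in> E"
        hence "z \<in> E \<inter> cyl r" unfolding U_def by auto
        hence "snd z > \<gamma> (fst z)" using E_graph[OF r] by blast
        with z(1) have False unfolding U_def by auto }
      thus ?thesis by blast
    qed
    ultimately have "U \<inter> closure E = {}" by (simp add: open_Int_closure_eq_empty)
    moreover have "y \<in> U" unfolding U_def using y gy False neg by auto
    ultimately have "y \<notin> closure E" by blast
    hence "y \<notin> E" using closure_subset by blast
    with \<open>y \<notin> closure E\<close> show ?thesis using neg unfolding tauE_def by simp
  qed
  have part1: "\<exists>C>0. \<forall>t>0. \<forall>r. 0 < r \<and> r \<le> r0 \<longrightarrow>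
            \<bar>LINT y:cyl r|lborel. kern P s y t * tauE E y\<bar> \<le> C * t * r powr (\<beta> - 2 * s)"
  proof -
    define c where "c = \<bar>C\<gamma>\<bar>"
    define \<delta> where "\<delta> = \<beta> - 2 * s"
    define n where "n = real CARD('m)"
    define Kr where "Kr = unit_ball_vol n * 2 powr (n - \<delta>) / (1 - 2 powr (- \<delta>))"
    define C where "C = 4 * c * CC * Kr + 1"
    have c: "0 \<le> c" unfolding c_def by simp
    have "CARD('m) > 0" by simp
    hence n1: "1 \<le> n" unfolding n_def by linarith
    have \<delta>: "0 < \<delta>" "\<delta> \<le> n" unfolding \<delta>_def using \<beta> s n1 by auto
    have q1: "2 powr (- \<delta>) < 1"
    proof -
      have "(2::real) powr -\<delta> < 2 powr 0" using \<delta> by (subst powr_less_cancel_iff) auto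
      thus ?thesis by simp
    qed
    have V: "0 \<le> unit_ball_vol n" unfolding n_def by (simp add: unit_ball_vol_def)
    have Kr: "0 \<le> Kr" unfolding Kr_def using q1 V by (auto intro!: divide_nonneg_pos mult_nonneg_nonneg)
    have C0: "0 \<le> 4 * c * CC * Kr" using c CC_pos Kr by simp
    have C: "C > 0" unfolding C_def using C0 by linarith
    have main: "\<bar>LINT y:cyl r|lborel. kern P s y t * tauE E y\<bar> \<le> C * t * r powr \<delta>"
      if t: "t > 0" and r: "0 < r" "r \<le> r0" for t r
    proof -
      define Q where "Q = (cyl r :: ((real^'m) \<times> real) set)"
      define f where "f y = kern P s y t * tauE E y" for y
      define g where "g y = kern P s y t * sgn (snd y)" for y :: "(real^'m) \<times> real"
      define B where "B = t powr (- N / (2 * s)) * CC"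
      define hr where "hr y = (if fst y \<in> ball 0 r \<and> \<bar>snd y\<bar> \<le> c * norm (fst y) powr (1 + \<beta>)
          then 2 * CC * t / norm (fst y) powr a else 0)" for y :: "(real^'m) \<times> real"
      have sndm[measurable]: "(\<lambda>y::(real^'m) \<times> real. snd y) \<in> borel_measurable borel"
        by (intro borel_measurable_continuous_onI continuous_intros)
      have fstm[measurable]: "(\<lambda>y::(real^'m) \<times> real. fst y) \<in> borel_measurable borel"
        by (intro borel_measurable_continuous_onI continuous_intros)
      have Qm[measurable]: "Q \<in> sets borel" unfolding Q_def by simp
      have fm[measurable]: "f \<in> borel_measurable borel" unfolding f_def by measurable
      have gm[measurable]: "g \<in> borel_measurable borel" unfolding g_def by measurable
      have hrm[measurable]: "hr \<in> borel_measurable borel"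
      proof -
        have [measurable]: "ball (0::real^'m) r \<in> sets borel" by simp
        have [measurable]: "(\<lambda>x::(real^'m::finite) \<times> real. c * norm (fst x) powr (1 + \<beta>)) \<in> borel_measurable (borel \<Otimes>\<^sub>M borel)" by measurable
        have [measurable]: "Measurable.pred (borel \<Otimes>\<^sub>M borel) (\<lambda>x::(real^'m::finite) \<times> real. \<bar>snd x\<bar> \<le> c * norm (fst x) powr (1 + \<beta>))"
          unfolding pred_def by (rule borel_measurable_le) measurable
        have "hr \<in> borel_measurable (borel \<Otimes>\<^sub>M borel)" unfolding hr_def by measurable
        thus ?thesis unfolding borel_prod .
      qed
      have Kb: "\<bar>kern P s y t\<bar> \<le> B" for y
        using kern_nonneg[OF P_lower CC_pos] kern_le_const[OF P_upper CC_pos] unfolding B_def N_def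
        by (metis abs_of_nonneg)
      have B0: "0 \<le> B" unfolding B_def using CC_pos by simp
      have Qfin: "emeasure lborel Q < \<infinity>"
        unfolding Q_def cyl_def by (intro emeasure_bounded_finite bounded_Times) auto
      have intf: "integrable lborel (\<lambda>y. indicator Q y *\<^sub>R f y)"
      proof (rule integrableI_bounded_set_indicator[where B=B])
        show "AE x in lborel. x \<in> Q \<longrightarrow> norm (f x) \<le> B"
        proof (intro AE_I2 impI)
          fix x
          have "\<bar>tauE E x\<bar> \<le> 1" unfolding tauE_def by (auto simp: indicator_def)
          hence "\<bar>kern P s x t\<bar> * \<bar>tauE E x\<bar> \<le> B * 1" using Kb B0 by (intro mult_mono) auto
          thus "norm (f x) \<le> B" unfolding f_def by (simp add: abs_mult)
        qed
      qed (use Qfin in auto)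
      have intg: "integrable lborel (\<lambda>y. indicator Q y *\<^sub>R g y)"
      proof (rule integrableI_bounded_set_indicator[where B=B])
        show "AE x in lborel. x \<in> Q \<longrightarrow> norm (g x) \<le> B"
        proof (intro AE_I2 impI)
          fix x :: "(real^'m) \<times> real"
          have "\<bar>sgn (snd x)\<bar> \<le> (1::real)" by (simp add: abs_sgn_eq)
          hence "\<bar>kern P s x t\<bar> * \<bar>sgn (snd x)\<bar> \<le> B * 1" using Kb B0 by (intro mult_mono) auto
          thus "norm (g x) \<le> B" unfolding g_def by (simp add: abs_mult)
        qed
      qed (use Qfin in auto)
      have sym0: "integral\<^sup>L lborel (\<lambda>y. indicator Q y *\<^sub>R g y) = 0"
      proof -
        define G where "G y = indicator Q y *\<^sub>R g y" for y
        have Gm[measurable]: "G \<in> borel_measurable borel" unfolding G_def by measurable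
        have Qsym: "(- y \<in> Q) = (y \<in> Q)" for y
          unfolding Q_def cyl_def by (cases y) auto
        have Gneg: "G (- y) = - G y" for y
        proof -
          have "kern P s (- y) t = kern P s y t" by (rule kern_uminus[OF P_radial])
          moreover have "sgn (snd (- y)) = - sgn (snd y)" by (cases y) (simp add: sgn_minus)
          ultimately show ?thesis unfolding G_def g_def using Qsym[of y] by (simp add: indicator_def)
        qed
        have "integral\<^sup>L lborel G = integral\<^sup>L (distr lborel borel uminus) G"
          by (simp add: lborel_distr_uminus_euclidean)
        also have "\<dots> = integral\<^sup>L lborel (\<lambda>y. G (- y))"
          by (rule integral_distr) auto
        also have "\<dots> = - integral\<^sup>L lborel G" by (simp add: Gneg)
        finally have "integral\<^sup>L lborel G = 0" by simp
        thus ?thesis unfolding G_def .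
      qed
      have "(LINT y:cyl r|lborel. kern P s y t * tauE E y) = integral\<^sup>L lborel (\<lambda>y. indicator Q y *\<^sub>R f y)"
        unfolding set_lebesgue_integral_def Q_def f_def by simp
      also have "\<dots> = integral\<^sup>L lborel (\<lambda>y. indicator Q y *\<^sub>R f y - indicator Q y *\<^sub>R g y)"
        using intf intg sym0 by simp
      finally have Jeq: "(LINT y:cyl r|lborel. kern P s y t * tauE E y) = integral\<^sup>L lborel (\<lambda>y. indicator Q y *\<^sub>R f y - indicator Q y *\<^sub>R g y)" .
      have "ennreal \<bar>LINT y:cyl r|lborel. kern P s y t * tauE E y\<bar>
          \<le> (\<integral>\<^sup>+y. norm (indicator Q y *\<^sub>R f y - indicator Q y *\<^sub>R g y) \<partial>lborel)"
        unfolding Jeq using integral_norm_bound_ennreal[OF Bochner_Integration.integrable_diff[OF intf intg]] by simp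
      also have "\<dots> \<le> (\<integral>\<^sup>+y. ennreal (hr y) \<partial>lborel)"
      proof (rule nn_integral_mono_AE)
        have pw: "norm (indicator Q y *\<^sub>R f y - indicator Q y *\<^sub>R g y) \<le> hr y" if y0: "y \<noteq> 0" for y
        proof -
          have hr0: "0 \<le> hr y" unfolding hr_def using CC_pos t by simp
          show ?thesis
          proof (cases "y \<in> Q")
            case False thus ?thesis using hr0 by simp
          next
            case True
            hence yc: "y \<in> cyl r" unfolding Q_def .
            hence fb: "fst y \<in> ball 0 r" unfolding cyl_def by (cases y) auto
            hence fb0: "fst y \<in> ball 0 r0" using r by auto
            show ?thesis
            proof (cases "\<bar>\<gamma> (fst y)\<bar> < \<bar>snd y\<bar>")
              case True
              hence "f y = g y" unfolding f_def g_def using tau_eq[OF r yc] by simp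
              thus ?thesis using hr0 by simp
            next
              case False
              hence sb: "\<bar>snd y\<bar> \<le> c * norm (fst y) powr (1 + \<beta>)"
                using \<gamma>_bound[OF fb0] unfolding c_def
                by (smt (verit, best) mult_right_mono powr_ge_zero)
              have f0: "fst y \<noteq> 0"
              proof
                assume "fst y = 0"
                hence "snd y = 0" using sb by simp
                with \<open>fst y = 0\<close> y0 show False by (cases y) (auto simp: zero_prod_def)
              qed
              have nf: "0 < norm (fst y)" using f0 by simp
              have K0: "0 \<le> kern P s y t" by (rule kern_nonneg[OF P_lower CC_pos])
              have K1: "kern P s y t \<le> CC * t / norm y powr a"
                using kern_le[OF P_upper s(1) t y0 CC_pos] unfolding a_def N_def .
              have a0: "0 < a" unfolding a_def N_eq using s by simp
              have "norm y powr a \<ge> norm (fst y) powr a"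
                using norm_fst_le[of "fst y" "snd y"] nf a0 by (intro powr_mono2) auto
              hence K2: "kern P s y t \<le> CC * t / norm (fst y) powr a"
                using K1 CC_pos t nf by (smt (verit, best) divide_left_mono mult_pos_pos powr_gt_zero)
              have d2: "\<bar>tauE E y - sgn (snd y)\<bar> \<le> 2"
                unfolding tauE_def by (auto simp: indicator_def sgn_if)
              have "norm (indicator Q y *\<^sub>R f y - indicator Q y *\<^sub>R g y) = kern P s y t * \<bar>tauE E y - sgn (snd y)\<bar>"
                using \<open>y \<in> Q\<close> K0 unfolding f_def g_def by (simp add: abs_mult right_diff_distrib[symmetric])
              also have "\<dots> \<le> (CC * t / norm (fst y) powr a) * 2"
                using K0 K2 d2 by (intro mult_mono) auto
              also have "\<dots> = hr y" unfolding hr_def using fb sb by simp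
              finally show ?thesis .
            qed
          qed
        qed
        show "AE y in lborel. ennreal (norm (indicator Q y *\<^sub>R f y - indicator Q y *\<^sub>R g y)) \<le> ennreal (hr y)"
          using AE_lborel_singleton[of 0] by (rule eventually_mono) (rule ennreal_leI, rule pw)
      qed
      also have "\<dots> \<le> ennreal (4 * c * CC * t * (Kr * r powr \<delta>))"
      proof -
        have hrm2: "(\<lambda>y. ennreal (hr y)) \<in> borel_measurable (lborel \<Otimes>\<^sub>M lborel)"
          unfolding lborel_prod by simp
        have inner: "(\<integral>\<^sup>+z. ennreal (hr (x, z)) \<partial>lborel)
            = ennreal (4 * c * CC * t) * (indicator (ball 0 r) x * ennreal (norm x powr (\<delta> - n)))" for x :: "real^'m"
        proof -
          define b where "b = c * norm x powr (1 + \<beta>)"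
          define D where "D = (if x \<in> ball 0 r then 2 * CC * t / norm x powr a else 0)"
          have b0: "0 \<le> b" unfolding b_def using c by simp
          have D0: "0 \<le> D" unfolding D_def using CC_pos t by simp
          have "(\<integral>\<^sup>+z. ennreal (hr (x, z)) \<partial>lborel) = (\<integral>\<^sup>+z. ennreal D * indicator {-b..b} z \<partial>lborel)"
            unfolding hr_def D_def b_def by (intro nn_integral_cong) (auto simp: indicator_def abs_le_iff)
          also have "\<dots> = ennreal D * emeasure lborel {-b..b}" by (rule nn_integral_cmult_indicator) simp
          also have "\<dots> = ennreal D * ennreal (b - - b)" using b0 by simp
          also have "\<dots> = ennreal (D * (2 * b))" using D0 b0 by (simp add: ennreal_mult)
          also have "D * (2 * b) = 4 * c * CC * t * (indicator (ball 0 r) x * norm x powr (\<delta> - n))"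
          proof (cases "x \<in> ball 0 r \<and> x \<noteq> 0")
            case False
            thus ?thesis unfolding D_def b_def by (auto simp: indicator_def)
          next
            case True
            hence nx: "0 < norm x" by simp
            have e: "\<delta> - n = (1 + \<beta>) - a" unfolding \<delta>_def n_def a_def N_eq by simp
            have "D * (2 * b) = 4 * c * CC * t * (norm x powr (1 + \<beta>) / norm x powr a)"
              unfolding D_def b_def using True by simp
            also have "norm x powr (1 + \<beta>) / norm x powr a = norm x powr (\<delta> - n)"
              unfolding e using nx by (simp add: powr_diff)
            finally show ?thesis using True by simp
          qed
          also have "ennreal (4 * c * CC * t * (indicator (ball 0 r) x * norm x powr (\<delta> - n)))
              = ennreal (4 * c * CC * t) * (indicator (ball 0 r) x * ennreal (norm x powr (\<delta> - n)))"
            using c CC_pos t by (auto simp: indicator_def ennreal_mult)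
          finally show ?thesis .
        qed
        have "(\<integral>\<^sup>+y. ennreal (hr y) \<partial>lborel) = (\<integral>\<^sup>+y. ennreal (hr y) \<partial>(lborel \<Otimes>\<^sub>M lborel))"
          by (simp add: lborel_prod)
        also have "\<dots> = (\<integral>\<^sup>+x. \<integral>\<^sup>+z. ennreal (hr (x, z)) \<partial>lborel \<partial>lborel)"
          by (rule lborel.nn_integral_fst[symmetric, OF hrm2])
        also have "\<dots> = (\<integral>\<^sup>+x. ennreal (4 * c * CC * t) * (indicator (ball 0 r) x * ennreal (norm (x::real^'m) powr (\<delta> - n))) \<partial>lborel)"
          by (simp add: inner)
        also have "\<dots> = ennreal (4 * c * CC * t) * (\<integral>\<^sup>+x. indicator (ball 0 r) x * ennreal (norm (x::real^'m) powr (\<delta> - n)) \<partial>lborel)"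
        proof (rule nn_integral_cmult)
          have [measurable]: "ball (0::real^'m) r \<in> sets borel" by simp
          have [measurable]: "(\<lambda>x::real^'m. norm x powr (\<delta> - n)) \<in> borel_measurable borel" by measurable
          show "(\<lambda>x::real^'m. indicator (ball 0 r) x * ennreal (norm x powr (\<delta> - n))) \<in> borel_measurable lborel"
            by simp
        qed
        also have "\<dots> \<le> ennreal (4 * c * CC * t) * ennreal (Kr * r powr \<delta>)"
        proof (rule mult_left_mono)
          have "(\<integral>\<^sup>+x. indicator (ball 0 r) x * ennreal (norm (x::real^'m) powr (\<delta> - n)) \<partial>lborel)
             \<le> ennreal (unit_ball_vol DIM(real^'m) * 2 powr (DIM(real^'m) - \<delta>) * r powr \<delta> / (1 - 2 powr (-\<delta>)))"
            using radial_in[of \<delta> r, where 'a="real^'m"] \<delta> r unfolding n_def by simp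
          also have "unit_ball_vol DIM(real^'m) * 2 powr (DIM(real^'m) - \<delta>) * r powr \<delta> / (1 - 2 powr (-\<delta>)) = Kr * r powr \<delta>"
            unfolding Kr_def n_def by simp
          finally show "(\<integral>\<^sup>+x. indicator (ball 0 r) x * ennreal (norm (x::real^'m) powr (\<delta> - n)) \<partial>lborel) \<le> ennreal (Kr * r powr \<delta>)" .
        qed simp
        also have "\<dots> = ennreal (4 * c * CC * t * (Kr * r powr \<delta>))"
          using c CC_pos t Kr by (simp add: ennreal_mult)
        finally show ?thesis .
      qed
      also have "\<dots> \<le> ennreal (C * t * r powr \<delta>)"
      proof (rule ennreal_leI)
        have "4 * c * CC * t * (Kr * r powr \<delta>) = (4 * c * CC * Kr) * (t * r powr \<delta>)" by simp
        also have "\<dots> \<le> C * (t * r powr \<delta>)" unfolding C_def using t by (intro mult_right_mono) auto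
        finally show "4 * c * CC * t * (Kr * r powr \<delta>) \<le> C * t * r powr \<delta>" by simp
      qed
      finally show ?thesis using C t r by (subst (asm) ennreal_le_iff) auto
    qed
    show ?thesis using C main unfolding \<delta>_def by blast
  qed
  have part2: "((\<lambda>t. LINT y:(- cyl r)|lborel.
                 (kern P s y t / t - CNs / norm y powr (dimN TYPE('m) + 2 * s)) * tauE E y)
              \<longlongrightarrow> 0) (at_right 0)" if r: "0 < r" "r \<le> r0" for r
  proof -
    define F where "F t y = indicator (- cyl r) y *\<^sub>R ((kern P s y t / t - CNs / norm y powr a) * tauE E y)" for t y
    define w where "w y = indicator (- ball 0 r) y * ((CC + CNs) * norm y powr (- a))" for y :: "(real^'m) \<times> real"
    have a_gt: "real DIM((real^'m) \<times> real) < a" unfolding a_def N_eq using s by simp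
    have Fmeas[measurable]: "F t \<in> borel_measurable borel" for t unfolding F_def by measurable
    have wmeas[measurable]: "w \<in> borel_measurable borel" unfolding w_def by measurable
    have w_nonneg: "0 \<le> w y" for y unfolding w_def using CC_pos CNs_pos by simp
    have w_int: "integrable lborel w"
    proof (rule integrableI_nonneg)
      show "w \<in> borel_measurable lborel" by simp
      show "AE x in lborel. 0 \<le> w x" using w_nonneg by simp
      have "(\<integral>\<^sup>+x. ennreal (w x) \<partial>lborel) = (\<integral>\<^sup>+x. ennreal (CC + CNs) * (indicator (- ball 0 r) x * ennreal (norm (x::(real^'m) \<times> real) powr (- a))) \<partial>lborel)"
        unfolding w_def using CC_pos CNs_pos by (intro nn_integral_cong) (auto simp: indicator_def ennreal_mult)
      also have "\<dots> = ennreal (CC + CNs) * (\<integral>\<^sup>+x. indicator (- ball 0 r) x * ennreal (norm (x::(real^'m) \<times> real) powr (- a)) \<partial>lborel)"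
        by (rule nn_integral_cmult) measurable
      also have "\<dots> < \<infinity>" using radial_out[OF a_gt r(1)] by (simp add: ennreal_mult_less_top)
      finally show "(\<integral>\<^sup>+x. ennreal (w x) \<partial>lborel) < \<infinity>" .
    qed
    have bound: "norm (F t y) \<le> w y" if t: "t > 0" for t y
    proof (cases "y \<in> cyl r")
      case True thus ?thesis unfolding F_def using w_nonneg by simp
    next
      case False
      hence yb: "y \<notin> ball 0 r" using ball_cyl by blast
      hence y0: "y \<noteq> 0" using r by auto
      have ny: "norm y > 0" using y0 by simp
      have K0: "0 \<le> kern P s y t" by (rule kern_nonneg[OF P_lower CC_pos])
      have K1: "kern P s y t \<le> CC * t / norm y powr a"
        using kern_le[OF P_upper s(1) t y0 CC_pos] unfolding a_def N_def .
      have tau: "\<bar>tauE E y\<bar> \<le> 1" unfolding tauE_def by (auto simp: indicator_def)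
      have "\<bar>kern P s y t / t - CNs / norm y powr a\<bar> \<le> CC / norm y powr a + CNs / norm y powr a"
      proof -
        have "kern P s y t / t \<le> CC / norm y powr a" using K1 t by (simp add: field_simps)
        moreover have "0 \<le> kern P s y t / t" using K0 t by simp
        moreover have "0 \<le> CNs / norm y powr a" using CNs_pos by simp
        ultimately show ?thesis by linarith
      qed
      also have "\<dots> = (CC + CNs) * norm y powr (- a)" using ny by (simp add: powr_minus field_simps)
      finally have 1: "\<bar>kern P s y t / t - CNs / norm y powr a\<bar> \<le> (CC + CNs) * norm y powr (- a)" .
      have "norm (F t y) = \<bar>kern P s y t / t - CNs / norm y powr a\<bar> * \<bar>tauE E y\<bar>"
        unfolding F_def using False by (simp add: abs_mult)
      also have "\<dots> \<le> (CC + CNs) * norm y powr (- a) * 1"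
        using 1 tau by (intro mult_mono) auto
      also have "\<dots> = w y" unfolding w_def using yb by simp
      finally show ?thesis .
    qed
    have lim: "((\<lambda>t. F t y) \<longlongrightarrow> 0) (at_right 0)" for y
    proof (cases "y \<in> cyl r")
      case True thus ?thesis unfolding F_def by simp
    next
      case False
      hence y0: "y \<noteq> 0" using ball_cyl r by (metis centre_in_ball subsetD)
      have "uniform_limit {y} (\<lambda>t y. kern P s y t / t) (\<lambda>y. CNs / norm y powr (dimN TYPE('m) + 2 * s)) (at_right 0)"
        using y0 by (intro kern_lim) auto
      from tendsto_uniform_limitI[OF this] have "((\<lambda>t. kern P s y t / t) \<longlongrightarrow> CNs / norm y powr a) (at_right 0)"
        unfolding a_def N_def by simp
      hence "((\<lambda>t. (kern P s y t / t - CNs / norm y powr a) * tauE E y) \<longlongrightarrow> (CNs / norm y powr a - CNs / norm y powr a) * tauE E y) (at_right 0)"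
        by (rule tendsto_mult_right[OF tendsto_diff[OF _ tendsto_const]])
      thus ?thesis unfolding F_def using False by simp
    qed
    have "((\<lambda>t. integral\<^sup>L lborel (F t)) \<longlongrightarrow> integral\<^sup>L lborel (\<lambda>y::(real^'m) \<times> real. 0::real)) (at_right 0)"
    proof (rule tendsto_at_right_sequentially[of 0 1])
      fix S :: "nat \<Rightarrow> real" assume S: "\<And>n. 0 < S n" "S \<longlonglongrightarrow> 0"
      have fl: "filterlim S (at_right 0) sequentially"
        using S by (intro tendsto_imp_filterlim_at_right) auto
      show "(\<lambda>n. integral\<^sup>L lborel (F (S n))) \<longlonglongrightarrow> integral\<^sup>L lborel (\<lambda>y::(real^'m) \<times> real. 0::real)"
      proof (rule integral_dominated_convergence[where w=w and s="\<lambda>n. F (S n)"])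
        show "AE y in lborel. (\<lambda>n. F (S n) y) \<longlonglongrightarrow> 0"
          using lim by (intro AE_I2 filterlim_compose[OF _ fl]) auto
        show "AE y in lborel. norm (F (S n) y) \<le> w y" for n
          using bound S(1) by auto
      qed (simp_all add: w_int)
    qed simp
    thus ?thesis unfolding set_lebesgue_integral_def F_def a_def N_def by simp
  qed
  show ?thesis using part1 part2 by blast
qed

end
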